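(* For all $\boldsymbol\mu,\boldsymbol\mu'\in\mathcal P(\mathcal X\times[K])$ and every collection $\boldsymbol\pi=(\pi_k)_{k\in[K]}$ of decision rules $\pi_k:\mathcal X\times\mathcal P(\mathcal X\times[K])\to\mathcal P(\mathcal U)$ with $|\pi_k(x,\boldsymbol\mu_1)-\pi_k(x,\boldsymbol\mu_2)|_1\le L_Q|\boldsymbol\mu_1-\boldsymbol\mu_2|_1$ for all $x,k,\boldsymbol\mu_1,\boldsymbol\mu_2$, $$\sum_{k\in[K]}|r_k^{\mathrm{MF}}(\boldsymbol\mu,\boldsymbol\pi)-r_k^{\mathrm{MF}}(\boldsymbol\mu',\boldsymbol\pi)|\le S_R|\boldsymbol\mu-\boldsymbol\mu'|_1,\qquad S_R=M_R(1+L_Q)+L_R(2+L_Q).$$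
   Context: $K\ge1$, $[K]=\{1,\dots,K\}$, $\mathcal X,\mathcal U$ finite, $\mathcal P(A)$ the probability distributions on $A$, $|\cdot|_1$ the $L_1$ norm, $M_R,L_R,L_Q>0$. For each $k$, $r_k:\mathcal X\times\mathcal U\times\mathcal P(\mathcal X\times[K])\times\mathcal P(\mathcal U\times[K])\to\mathbb R$ satisfies $|r_k(x,u,\boldsymbol\mu_1,\boldsymbol\nu_1)|\le M_R$ and $|r_k(x,u,\boldsymbol\mu_1,\boldsymbol\nu_1)-r_k(x,u,\boldsymbol\mu_2,\boldsymbol\nu_2)|\le L_R(|\boldsymbol\mu_1-\boldsymbol\mu_2|_1+|\boldsymbol\nu_1-\boldsymbol\nu_2|_1)$ for all arguments. Define $\nu^{\mathrm{MF}}(\boldsymbol\mu,\boldsymbol\pi)(u,k)=\sum_x\pi_k(x,\boldsymbol\mu)(u)\boldsymbol\mu(x,k)$ and $r_k^{\mathrm{MF}}(\boldsymbol\mu,\boldsymbol\pi)=\sum_{x\in\mathcal X}\sum_{u\in\mathcal U}\boldsymbol\mu(x,k)\pi_k(x,\boldsymbol\mu)(u)\,r_k(x,u,\boldsymbol\mu,\nu^{\mathrm{MF}}(\boldsymbol\mu,\boldsymbol\pi))$. *)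

theory Defs
  imports Main "HOL-Analysis.Analysis"
begin

definition is_dist :: "'a set \<Rightarrow> ('a \<Rightarrow> real) \<Rightarrow> bool" where
  "is_dist A p \<longleftrightarrow> (\<forall>a. 0 \<le> p a) \<and> (\<forall>a. a \<notin> A \<longrightarrow> p a = 0) \<and> sum p A = 1"

definition l1 :: "'a set \<Rightarrow> ('a \<Rightarrow> real) \<Rightarrow> ('a \<Rightarrow> real) \<Rightarrow> real" where
  "l1 A p q = (\<Sum>a\<in>A. \<bar>p a - q a\<bar>)"

abbreviation idx :: "nat \<Rightarrow> nat set" where "idx K \<equiv> {1..K}"

definition nu_MF :: "('x::finite \<times> nat \<Rightarrow> real) \<Rightarrow> (nat \<Rightarrow> 'x \<Rightarrow> ('x \<times> nat \<Rightarrow> real) \<Rightarrow> ('u \<Rightarrow> real))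
    \<Rightarrow> ('u \<times> nat \<Rightarrow> real)" where
  "nu_MF \<mu> \<pi> = (\<lambda>(u, k). \<Sum>x\<in>UNIV. \<pi> k x \<mu> u * \<mu> (x, k))"

definition r_MF :: "(nat \<Rightarrow> 'x \<Rightarrow> 'u \<Rightarrow> ('x \<times> nat \<Rightarrow> real) \<Rightarrow> ('u \<times> nat \<Rightarrow> real) \<Rightarrow> real)
    \<Rightarrow> nat \<Rightarrow> ('x::finite \<times> nat \<Rightarrow> real) \<Rightarrow> (nat \<Rightarrow> 'x \<Rightarrow> ('x \<times> nat \<Rightarrow> real) \<Rightarrow> ('u::finite \<Rightarrow> real))
    \<Rightarrow> real" where
  "r_MF r k \<mu> \<pi> = (\<Sum>x\<in>UNIV. \<Sum>u\<in>UNIV. \<mu> (x, k) * \<pi> k x \<mu> u * r k x u \<mu> (nu_MF \<mu> \<pi>))"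

end

theory Submission
  imports Defs
begin

lemma l1_swap: "l1 (UNIV \<times> B) p q = (\<Sum>k\<in>B. \<Sum>x\<in>(UNIV::'x::finite set). \<bar>p (x,k) - q (x,k)\<bar>)"
proof -
  have "(\<Sum>x\<in>(UNIV::'x set). \<Sum>k\<in>B. \<bar>p (x,k) - q (x,k)\<bar>) = l1 (UNIV \<times> B) p q"
    unfolding l1_def by (simp add: sum.cartesian_product)
  moreover have "(\<Sum>x\<in>(UNIV::'x set). \<Sum>k\<in>B. f x k) = (\<Sum>k\<in>B. \<Sum>x\<in>UNIV. f x k)" for f :: "'x \<Rightarrow> _ \<Rightarrow> real"
    by (rule sum.swap)
  ultimately show ?thesis by simp
qed

lemma sum_swap_prod: "sum p (UNIV \<times> B) = (\<Sum>k\<in>B. \<Sum>x\<in>(UNIV::'x::finite set). p (x,k))"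
proof -
  have "(\<Sum>x\<in>(UNIV::'x set). \<Sum>k\<in>B. p (x,k)) = sum p (UNIV \<times> B)"
    by (simp add: sum.cartesian_product)
  moreover have "(\<Sum>x\<in>(UNIV::'x set). \<Sum>k\<in>B. p (x,k)) = (\<Sum>k\<in>B. \<Sum>x\<in>UNIV. p (x,k))"
    by (rule sum.swap)
  ultimately show ?thesis by simp
qed

lemma pt_bound:
  fixes a a' b b' c c' M L :: real
  assumes "a' \<ge> 0" "b \<ge> 0" "b' \<ge> 0" "\<bar>c\<bar> \<le> M" "\<bar>c - c'\<bar> \<le> L"
  shows "\<bar>a*b*c - a'*b'*c'\<bar> \<le> \<bar>a - a'\<bar> * M * b + a' * M * \<bar>b - b'\<bar> + a' * L * b'"
proof -
  have e: "a*b*c - a'*b'*c' = (a-a')*b*c + a'*(b-b')*c + a'*b'*(c-c')" by algebra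
  have 1: "\<bar>(a-a')*b*c\<bar> \<le> \<bar>a - a'\<bar> * b * M"
    using assms by (simp add: abs_mult mult_left_mono)
  have 2: "\<bar>a'*(b-b')*c\<bar> \<le> a' * \<bar>b - b'\<bar> * M"
    using assms by (simp add: abs_mult mult_left_mono)
  have 3: "\<bar>a'*b'*(c-c')\<bar> \<le> a' * b' * L"
    using assms by (simp add: abs_mult mult_left_mono)
  have 4: "\<bar>(a-a')*b*c + a'*(b-b')*c + a'*b'*(c-c')\<bar> \<le> \<bar>(a-a')*b*c\<bar> + \<bar>a'*(b-b')*c\<bar> + \<bar>a'*b'*(c-c')\<bar>"
    by (meson abs_triangle_ineq add_mono order_trans order_refl)
  have 5: "\<bar>a - a'\<bar> * b * M + a' * \<bar>b - b'\<bar> * M + a' * b' * L = \<bar>a - a'\<bar> * M * b + a' * M * \<bar>b - b'\<bar> + a' * L * b'"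
    by (simp add: mult_ac)
  show ?thesis unfolding e using 1 2 3 4 5 by linarith
qed

lemma term_bound:
  fixes a a' :: "'x::finite \<Rightarrow> real" and b b' c c' :: "'x \<Rightarrow> 'u::finite \<Rightarrow> real"
  assumes a': "\<And>x. a' x \<ge> 0" and b: "\<And>x u. b x u \<ge> 0" and b': "\<And>x u. b' x u \<ge> 0"
    and sb: "\<And>x. sum (b x) UNIV = 1" and sb': "\<And>x. sum (b' x) UNIV = 1"
    and c: "\<And>x u. \<bar>c x u\<bar> \<le> M" and cc: "\<And>x u. \<bar>c x u - c' x u\<bar> \<le> L"
    and E: "\<And>x. (\<Sum>u\<in>UNIV. \<bar>b x u - b' x u\<bar>) \<le> E" and M: "M \<ge> 0"
  shows "\<bar>(\<Sum>x\<in>UNIV. \<Sum>u\<in>UNIV. a x * b x u * c x u) - (\<Sum>x\<in>UNIV. \<Sum>u\<in>UNIV. a' x * b' x u * c' x u)\<bar>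
     \<le> M * (\<Sum>x\<in>UNIV. \<bar>a x - a' x\<bar>) + (M*E + L) * (\<Sum>x\<in>UNIV. a' x)"
proof -
  have "\<bar>(\<Sum>x\<in>UNIV. \<Sum>u\<in>UNIV. a x * b x u * c x u) - (\<Sum>x\<in>UNIV. \<Sum>u\<in>UNIV. a' x * b' x u * c' x u)\<bar>
      = \<bar>\<Sum>x\<in>UNIV. \<Sum>u\<in>UNIV. (a x * b x u * c x u - a' x * b' x u * c' x u)\<bar>"
    by (simp add: sum_subtractf)
  also have "\<dots> \<le> (\<Sum>x\<in>UNIV. \<Sum>u\<in>UNIV. \<bar>a x * b x u * c x u - a' x * b' x u * c' x u\<bar>)"
    by (rule order_trans[OF sum_abs sum_mono[OF sum_abs]])
  also have "\<dots> \<le> (\<Sum>x\<in>UNIV. \<Sum>u\<in>UNIV. \<bar>a x - a' x\<bar> * M * b x u + a' x * M * \<bar>b x u - b' x u\<bar> + a' x * L * b' x u)"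
    by (intro sum_mono pt_bound a' b b' c cc)
  also have "\<dots> = (\<Sum>x\<in>UNIV. \<bar>a x - a' x\<bar> * M * sum (b x) UNIV + a' x * M * (\<Sum>u\<in>UNIV. \<bar>b x u - b' x u\<bar>) + a' x * L * sum (b' x) UNIV)"
    by (simp only: sum.distrib sum_distrib_left)
  also have "\<dots> \<le> (\<Sum>x\<in>UNIV. \<bar>a x - a' x\<bar> * M + a' x * M * E + a' x * L)"
    using sb sb' E a' M by (intro sum_mono) (simp add: mult_left_mono)
  also have "\<dots> = M * (\<Sum>x\<in>UNIV. \<bar>a x - a' x\<bar>) + (M*E + L) * (\<Sum>x\<in>UNIV. a' x)"
    by (simp add: sum.distrib sum_distrib_left algebra_simps)
  finally show ?thesis .
qed

lemma nu_bound:
  fixes a a' :: "'x::finite \<Rightarrow> real" and b b' :: "'x \<Rightarrow> 'u::finite \<Rightarrow> real"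
  assumes a': "\<And>x. a' x \<ge> 0" and b: "\<And>x u. b x u \<ge> 0"
    and sb: "\<And>x. sum (b x) UNIV = 1"
    and E: "\<And>x. (\<Sum>u\<in>UNIV. \<bar>b x u - b' x u\<bar>) \<le> E"
  shows "(\<Sum>u\<in>UNIV. \<bar>(\<Sum>x\<in>UNIV. b x u * a x) - (\<Sum>x\<in>UNIV. b' x u * a' x)\<bar>)
     \<le> (\<Sum>x\<in>UNIV. \<bar>a x - a' x\<bar>) + E * (\<Sum>x\<in>UNIV. a' x)"
proof -
  have "(\<Sum>u\<in>UNIV. \<bar>(\<Sum>x\<in>UNIV. b x u * a x) - (\<Sum>x\<in>UNIV. b' x u * a' x)\<bar>)
      = (\<Sum>u\<in>UNIV. \<bar>\<Sum>x\<in>UNIV. b x u * (a x - a' x) + (b x u - b' x u) * a' x\<bar>)"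
    by (simp add: sum_subtractf[symmetric] algebra_simps)
  also have "\<dots> \<le> (\<Sum>u\<in>UNIV. \<Sum>x\<in>UNIV. b x u * \<bar>a x - a' x\<bar> + \<bar>b x u - b' x u\<bar> * a' x)"
  proof (intro sum_mono)
    fix u
    show "\<bar>\<Sum>x\<in>UNIV. b x u * (a x - a' x) + (b x u - b' x u) * a' x\<bar> \<le> (\<Sum>x\<in>UNIV. b x u * \<bar>a x - a' x\<bar> + \<bar>b x u - b' x u\<bar> * a' x)"
      by (rule order_trans[OF sum_abs], intro sum_mono)
        (metis a' abs_mult abs_of_nonneg abs_triangle_ineq b)
  qed
  also have "\<dots> = (\<Sum>x\<in>UNIV. \<bar>a x - a' x\<bar> * sum (b x) UNIV + (\<Sum>u\<in>UNIV. \<bar>b x u - b' x u\<bar>) * a' x)"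
    by (subst sum.swap) (simp add: sum.distrib sum_distrib_left sum_distrib_right algebra_simps)
  also have "\<dots> \<le> (\<Sum>x\<in>UNIV. \<bar>a x - a' x\<bar> + E * a' x)"
    using sb E a' by (intro sum_mono) (simp add: mult_right_mono)
  also have "\<dots> = (\<Sum>x\<in>UNIV. \<bar>a x - a' x\<bar>) + E * (\<Sum>x\<in>UNIV. a' x)"
    by (simp add: sum.distrib sum_distrib_left)
  finally show ?thesis .
qed

lemma nu_dist:
  fixes \<mu> :: "'x::finite \<times> nat \<Rightarrow> real" and \<pi> :: "nat \<Rightarrow> 'x \<Rightarrow> ('x \<times> nat \<Rightarrow> real) \<Rightarrow> ('u::finite \<Rightarrow> real)"
  assumes \<mu>: "is_dist (UNIV \<times> idx K) \<mu>" and \<pi>d: "\<And>k x. k \<in> idx K \<Longrightarrow> is_dist UNIV (\<pi> k x \<mu>)"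
  shows "is_dist (UNIV \<times> idx K) (nu_MF \<mu> \<pi>)"
proof -
  have z: "\<mu> (x,k) = 0" if "k \<notin> idx K" for x k using \<mu> that unfolding is_dist_def by auto
  have nn: "0 \<le> nu_MF \<mu> \<pi> (u,k)" for u k
  proof (cases "k \<in> idx K")
    case True
    then show ?thesis using \<mu> \<pi>d[OF True] unfolding is_dist_def nu_MF_def by (auto intro!: sum_nonneg)
  next
    case False
    then show ?thesis using z unfolding nu_MF_def by simp
  qed
  have out: "nu_MF \<mu> \<pi> (u,k) = 0" if "k \<notin> idx K" for u k using z[OF that] unfolding nu_MF_def by simp
  have "sum (nu_MF \<mu> \<pi>) (UNIV \<times> idx K) = (\<Sum>k\<in>idx K. \<Sum>u\<in>UNIV. \<Sum>x\<in>UNIV. \<pi> k x \<mu> u * \<mu> (x, k))"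
    by (simp add: sum_swap_prod nu_MF_def)
  also have "\<dots> = (\<Sum>k\<in>idx K. \<Sum>x\<in>UNIV. \<mu> (x, k) * sum (\<pi> k x \<mu>) UNIV)"
    by (intro sum.cong refl, subst sum.swap) (simp add: sum_distrib_left mult_ac)
  also have "\<dots> = (\<Sum>k\<in>idx K. \<Sum>x\<in>UNIV. \<mu> (x, k))"
    using \<pi>d unfolding is_dist_def by simp
  also have "\<dots> = 1" using \<mu> unfolding is_dist_def by (simp add: sum_swap_prod)
  finally show ?thesis unfolding is_dist_def using nn out by auto
qed

theorem lemma3:
  fixes K :: nat and M_R L_R L_Q :: real
    and r :: "nat \<Rightarrow> 'x::finite \<Rightarrow> 'u::finite \<Rightarrow> ('x \<times> nat \<Rightarrow> real) \<Rightarrow> ('u \<times> nat \<Rightarrow> real) \<Rightarrow> real"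
    and \<pi> :: "nat \<Rightarrow> 'x \<Rightarrow> ('x \<times> nat \<Rightarrow> real) \<Rightarrow> ('u \<Rightarrow> real)"
    and \<mu> \<mu>' :: "'x \<times> nat \<Rightarrow> real"
  assumes K: "K \<ge> 1"
    and pos: "M_R > 0" "L_R > 0" "L_Q > 0"
    and r_bound: "\<And>k x u \<mu>1 \<nu>1. k \<in> idx K \<Longrightarrow> is_dist (UNIV \<times> idx K) \<mu>1 \<Longrightarrow>
         is_dist (UNIV \<times> idx K) \<nu>1 \<Longrightarrow> \<bar>r k x u \<mu>1 \<nu>1\<bar> \<le> M_R"
    and r_lip: "\<And>k x u \<mu>1 \<nu>1 \<mu>2 \<nu>2. k \<in> idx K \<Longrightarrow>
         is_dist (UNIV \<times> idx K) \<mu>1 \<Longrightarrow> is_dist (UNIV \<times> idx K) \<nu>1 \<Longrightarrow>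
         is_dist (UNIV \<times> idx K) \<mu>2 \<Longrightarrow> is_dist (UNIV \<times> idx K) \<nu>2 \<Longrightarrow>
         \<bar>r k x u \<mu>1 \<nu>1 - r k x u \<mu>2 \<nu>2\<bar>
           \<le> L_R * (l1 (UNIV \<times> idx K) \<mu>1 \<mu>2 + l1 (UNIV \<times> idx K) \<nu>1 \<nu>2)"
    and \<pi>_dist: "\<And>k x \<mu>1. k \<in> idx K \<Longrightarrow> is_dist (UNIV \<times> idx K) \<mu>1 \<Longrightarrow>
         is_dist UNIV (\<pi> k x \<mu>1)"
    and \<pi>_lip: "\<And>k x \<mu>1 \<mu>2. k \<in> idx K \<Longrightarrow>
         is_dist (UNIV \<times> idx K) \<mu>1 \<Longrightarrow> is_dist (UNIV \<times> idx K) \<mu>2 \<Longrightarrow>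
         l1 UNIV (\<pi> k x \<mu>1) (\<pi> k x \<mu>2) \<le> L_Q * l1 (UNIV \<times> idx K) \<mu>1 \<mu>2"
    and \<mu>: "is_dist (UNIV \<times> idx K) \<mu>"
    and \<mu>': "is_dist (UNIV \<times> idx K) \<mu>'"
  shows "(\<Sum>k\<in>idx K. \<bar>r_MF r k \<mu> \<pi> - r_MF r k \<mu>' \<pi>\<bar>)
           \<le> (M_R * (1 + L_Q) + L_R * (2 + L_Q)) * l1 (UNIV \<times> idx K) \<mu> \<mu>'"
proof -
  define D where "D = l1 (UNIV \<times> idx K) \<mu> \<mu>'"
  define \<nu> where "\<nu> = nu_MF \<mu> \<pi>"
  define \<nu>' where "\<nu>' = nu_MF \<mu>' \<pi>"
  define Dn where "Dn = l1 (UNIV \<times> idx K) \<nu> \<nu>'"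
  have \<nu>d: "is_dist (UNIV \<times> idx K) \<nu>" unfolding \<nu>_def by (rule nu_dist[OF \<mu>]) (rule \<pi>_dist[OF _ \<mu>])
  have \<nu>'d: "is_dist (UNIV \<times> idx K) \<nu>'" unfolding \<nu>'_def by (rule nu_dist[OF \<mu>']) (rule \<pi>_dist[OF _ \<mu>'])
  have D_eq: "D = (\<Sum>k\<in>idx K. \<Sum>x\<in>UNIV. \<bar>\<mu> (x,k) - \<mu>' (x,k)\<bar>)" unfolding D_def by (rule l1_swap)
  have D0: "D \<ge> 0" unfolding D_def l1_def by (auto intro: sum_nonneg)
  have s1: "(\<Sum>k\<in>idx K. \<Sum>x\<in>UNIV. \<mu>' (x,k)) = 1" using \<mu>' unfolding is_dist_def by (simp add: sum_swap_prod)
  have \<mu>'nn: "\<And>x k. \<mu>' (x,k) \<ge> 0" using \<mu>' unfolding is_dist_def by auto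
  have E: "(\<Sum>u\<in>UNIV. \<bar>\<pi> k x \<mu> u - \<pi> k x \<mu>' u\<bar>) \<le> L_Q * D" if "k \<in> idx K" for k x
    using \<pi>_lip[OF that \<mu> \<mu>', of x] unfolding D_def l1_def by simp
  have "Dn = (\<Sum>k\<in>idx K. \<Sum>u\<in>UNIV. \<bar>\<nu> (u,k) - \<nu>' (u,k)\<bar>)" unfolding Dn_def by (rule l1_swap)
  also have "\<dots> \<le> (\<Sum>k\<in>idx K. (\<Sum>x\<in>UNIV. \<bar>\<mu> (x,k) - \<mu>' (x,k)\<bar>) + (L_Q * D) * (\<Sum>x\<in>UNIV. \<mu>' (x,k)))"
  proof (rule sum_mono)
    fix k assume k: "k \<in> idx K"
    show "(\<Sum>u\<in>UNIV. \<bar>\<nu> (u,k) - \<nu>' (u,k)\<bar>) \<le> (\<Sum>x\<in>UNIV. \<bar>\<mu> (x,k) - \<mu>' (x,k)\<bar>) + (L_Q * D) * (\<Sum>x\<in>UNIV. \<mu>' (x,k))"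
      unfolding \<nu>_def \<nu>'_def nu_MF_def
      using nu_bound[where a="\<lambda>x. \<mu> (x,k)" and a'="\<lambda>x. \<mu>' (x,k)" and b="\<lambda>x u. \<pi> k x \<mu> u"
          and b'="\<lambda>x u. \<pi> k x \<mu>' u" and E="L_Q * D"] \<mu>'nn \<pi>_dist[OF k \<mu>] E[OF k]
      unfolding is_dist_def by simp
  qed
  also have "\<dots> = D + L_Q * D"
    using s1 D_eq by (simp add: sum.distrib sum_distrib_left[symmetric])
  finally have Dn: "Dn \<le> (1 + L_Q) * D" by (simp add: algebra_simps)
  have "(\<Sum>k\<in>idx K. \<bar>r_MF r k \<mu> \<pi> - r_MF r k \<mu>' \<pi>\<bar>)
     \<le> (\<Sum>k\<in>idx K. M_R * (\<Sum>x\<in>UNIV. \<bar>\<mu> (x,k) - \<mu>' (x,k)\<bar>) + (M_R * (L_Q * D) + L_R * (D + Dn)) * (\<Sum>x\<in>UNIV. \<mu>' (x,k)))"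
  proof (rule sum_mono)
    fix k assume k: "k \<in> idx K"
    show "\<bar>r_MF r k \<mu> \<pi> - r_MF r k \<mu>' \<pi>\<bar> \<le> M_R * (\<Sum>x\<in>UNIV. \<bar>\<mu> (x,k) - \<mu>' (x,k)\<bar>) + (M_R * (L_Q * D) + L_R * (D + Dn)) * (\<Sum>x\<in>UNIV. \<mu>' (x,k))"
      unfolding r_MF_def \<nu>_def[symmetric] \<nu>'_def[symmetric]
    proof (rule term_bound)
      show "\<And>x. 0 \<le> \<mu>' (x, k)" by (rule \<mu>'nn)
      show "\<And>x u. 0 \<le> \<pi> k x \<mu> u" "\<And>x. sum (\<pi> k x \<mu>) UNIV = 1" using \<pi>_dist[OF k \<mu>] unfolding is_dist_def by auto
      show "\<And>x u. 0 \<le> \<pi> k x \<mu>' u" "\<And>x. sum (\<pi> k x \<mu>') UNIV = 1" using \<pi>_dist[OF k \<mu>'] unfolding is_dist_def by auto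
      show "\<And>x u. \<bar>r k x u \<mu> \<nu>\<bar> \<le> M_R" using r_bound[OF k \<mu> \<nu>d] .
      show "\<And>x u. \<bar>r k x u \<mu> \<nu> - r k x u \<mu>' \<nu>'\<bar> \<le> L_R * (D + Dn)"
        using r_lip[OF k \<mu> \<nu>d \<mu>' \<nu>'d] unfolding D_def Dn_def .
      show "\<And>x. (\<Sum>u\<in>UNIV. \<bar>\<pi> k x \<mu> u - \<pi> k x \<mu>' u\<bar>) \<le> L_Q * D" using E[OF k] .
      show "0 \<le> M_R" using pos by simp
    qed
  qed
  also have "\<dots> = M_R * D + (M_R * (L_Q * D) + L_R * (D + Dn))"
    using s1 D_eq by (simp add: sum.distrib sum_distrib_left[symmetric])
  also have "\<dots> \<le> M_R * D + (M_R * (L_Q * D) + L_R * (D + (1 + L_Q) * D))"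
    using Dn pos by simp
  also have "\<dots> = (M_R * (1 + L_Q) + L_R * (2 + L_Q)) * D" by (simp add: algebra_simps)
  finally show ?thesis unfolding D_def .
qed

end
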